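(* In the social learning model described in the context, with probability $1$ it holds that $\lim_{t\to\infty} \ell_t/t = 0$.
   Context: Social learning model. A state $\theta\in\{-1,+1\}$ is drawn with $\mathbb{P}(\theta=+1)=\mathbb{P}(\theta=-1)=1/2$. Agents $t=1,2,\dots$ receive private signals $s_t\in\mathbb{R}$ that are i.i.d. conditionally on $\theta$, with CDF $F_+$ if $\theta=+1$ and $F_-$ if $\theta=-1$; $F_+$ and $F_-$ are mutually absolutely continuous. Let $L_t=\log\frac{\mathbb{P}(\theta=+1\mid s_t)}{\mathbb{P}(\theta=-1\mid s_t)}$ be the private log-likelihood ratio, and let $G_+$, $G_-$ denote the CDFs of $L_t$ conditional on $\theta=+1$, $\theta=-1$ respectively. Signals are assumed unbounded: for every $M\in\mathbb{R}$, $\mathbb{P}(L_t>M)>0$ and $\mathbb{P}(L_t<-M)>0$. Agent $t$ observes $a_1,\dots,a_{t-1}$ and her own signal and chooses $a_t\in\{-1,+1\}$ (utility $1$ if $a_t=\theta$, else $0$). The public belief is $\mu_t=\mathbb{P}(\theta=+1\mid a_1,\dots,a_{t-1})$ and $\ell_t=\log\frac{\mu_t}{1-\mu_t}$ (so $\ell_1=0$). In equilibrium $a_t=+1$ iff $\ell_t+L_t>0$, and otherwise $a_t=-1$. Consequently $\ell_{t+1}=\ell_t+D_+(\ell_t)$ if $a_t=+1$ and $\ell_{t+1}=\ell_t+D_-(\ell_t)$ if $a_t=-1$, where $D_+(x)=\log\frac{1-G_+(-x)}{1-G_-(-x)}$ and $D_-(x)=\log\frac{G_+(-x)}{G_-(-x)}$.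 We write $\mathbb{P}_+(\cdot)=\mathbb{P}(\cdot\mid\theta=+1)$ and $\mathbb{E}_+$ for the corresponding expectation. *)

theory Defs
  imports "HOL-Probability.Probability"
begin

definition llr_cdf :: "real measure \<Rightarrow> (real \<Rightarrow> real) \<Rightarrow> real \<Rightarrow> real" where
  "llr_cdf F L x = measure F {s \<in> space F. L s \<le> x}"

definition D_plus :: "real measure \<Rightarrow> real measure \<Rightarrow> (real \<Rightarrow> real) \<Rightarrow> real \<Rightarrow> real" where
  "D_plus Fp Fm L x = ln ((1 - llr_cdf Fp L (- x)) / (1 - llr_cdf Fm L (- x)))"

definition D_minus :: "real measure \<Rightarrow> real measure \<Rightarrow> (real \<Rightarrow> real) \<Rightarrow> real \<Rightarrow> real" where
  "D_minus Fp Fm L x = ln (llr_cdf Fp L (- x) / llr_cdf Fm L (- x))"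

text \<open>Public log-likelihood ratio and actions, zero-indexed:
  pub_llr ... n = l_{n+1}, action ... n = a_{n+1}; sig n is the signal of agent n+1.\<close>
fun pub_llr :: "real measure \<Rightarrow> real measure \<Rightarrow> (real \<Rightarrow> real) \<Rightarrow> (nat \<Rightarrow> real) \<Rightarrow> nat \<Rightarrow> real"
and action :: "real measure \<Rightarrow> real measure \<Rightarrow> (real \<Rightarrow> real) \<Rightarrow> (nat \<Rightarrow> real) \<Rightarrow> nat \<Rightarrow> int" where
  "pub_llr Fp Fm L sig 0 = 0"
| "pub_llr Fp Fm L sig (Suc n) =
     (if action Fp Fm L sig n = 1
      then pub_llr Fp Fm L sig n + D_plus Fp Fm L (pub_llr Fp Fm L sig n)
      else pub_llr Fp Fm L sig n + D_minus Fp Fm L (pub_llr Fp Fm L sig n))"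
| "action Fp Fm L sig n = (if pub_llr Fp Fm L sig n + L (sig n) > 0 then 1 else -1)"

end

theory Submission
  imports Defs
begin


locale sl =
  fixes Fp Fm :: "real measure" and L :: "real \<Rightarrow> real"
  assumes pFp: "prob_space Fp" and pFm: "prob_space Fm"
  and sFp: "sets Fp = sets borel" and sFm: "sets Fm = sets borel"
  and Lmeas: "L \<in> borel_measurable borel"
  and dens: "Fp = density Fm (\<lambda>x. ennreal (exp (L x)))"
  and acpm: "absolutely_continuous Fp Fm"
  and unb: "\<And>K. measure Fm {y. L y > K} > 0" "\<And>K. measure Fm {y. L y < K} > 0"
begin

lemma spFp[simp]: "space Fp = UNIV" using sets_eq_imp_space_eq[OF sFp] by simp
lemma spFm[simp]: "space Fm = UNIV" using sets_eq_imp_space_eq[OF sFm] by simp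


lemma setsFm: "A \<in> sets borel \<Longrightarrow> A \<in> sets Fm" using sFm by simp
lemma setsFp: "A \<in> sets borel \<Longrightarrow> A \<in> sets Fp" using sFp by simp

lemma Lgt[measurable]: "{y. L y > c} \<in> sets borel" "{y. L y \<ge> c} \<in> sets borel"
   "{y. L y < c} \<in> sets borel" "{y. L y \<le> c} \<in> sets borel"
  using Lmeas by measurable

declare sFp[simp] sFm[simp] Lgt[simp]

lemma dens_ge:
  assumes E: "E \<in> sets borel" and a: "\<And>y. y \<in> E \<Longrightarrow> L y \<ge> a"
  shows "measure Fp E \<ge> exp a * measure Fm E"
proof -
  interpret P: prob_space Fp by (rule pFp)
  interpret M: prob_space Fm by (rule pFm)
  have "emeasure Fp E = (\<integral>\<^sup>+ y. ennreal (exp (L y)) * indicator E y \<partial>Fm)"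
    unfolding dens using E Lmeas by (subst emeasure_density) (auto simp: sFm measurable_cong_sets[OF sFm refl])
  also have "\<dots> \<ge> (\<integral>\<^sup>+ y. ennreal (exp a) * indicator E y \<partial>Fm)"
    using a by (intro nn_integral_mono) (auto simp: indicator_def)
  finally have "emeasure Fp E \<ge> ennreal (exp a) * emeasure Fm E"
    using E by (simp add: nn_integral_cmult_indicator sFm)
  then show ?thesis
    by (simp add: P.emeasure_eq_measure M.emeasure_eq_measure ennreal_mult'[symmetric])
qed

lemma dens_le:
  assumes E: "E \<in> sets borel" and a: "\<And>y. y \<in> E \<Longrightarrow> L y \<le> a"
  shows "measure Fp E \<le> exp a * measure Fm E"
proof -
  interpret P: prob_space Fp by (rule pFp)
  interpret M: prob_space Fm by (rule pFm)
  have "emeasure Fp E = (\<integral>\<^sup>+ y. ennreal (exp (L y)) * indicator E y \<partial>Fm)"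
    unfolding dens using E Lmeas by (subst emeasure_density) (auto simp: sFm measurable_cong_sets[OF sFm refl])
  also have "\<dots> \<le> (\<integral>\<^sup>+ y. ennreal (exp a) * indicator E y \<partial>Fm)"
    using a by (intro nn_integral_mono) (auto simp: indicator_def)
  finally have "emeasure Fp E \<le> ennreal (exp a) * emeasure Fm E"
    using E by (simp add: nn_integral_cmult_indicator sFm)
  then show ?thesis
    by (simp add: P.emeasure_eq_measure M.emeasure_eq_measure ennreal_mult'[symmetric])
qed


definition "P c = measure Fp {y. L y > c}"
definition "Q c = measure Fm {y. L y > c}"

lemma compl_Fp: "measure Fp {y. L y \<le> c} = 1 - P c"
proof -
  interpret prob_space Fp by (rule pFp)
  have "measure Fp {y. L y \<le> c} = measure Fp (space Fp - {y. L y > c})"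
    by (rule arg_cong[where f="measure Fp"]) auto
  also have "\<dots> = 1 - measure Fp {y. L y > c}" by (rule prob_compl) (simp add: sFp sFm Lgt)
  finally show ?thesis unfolding P_def .
qed

lemma compl_Fm: "measure Fm {y. L y \<le> c} = 1 - Q c"
proof -
  interpret prob_space Fm by (rule pFm)
  have "measure Fm {y. L y \<le> c} = measure Fm (space Fm - {y. L y > c})"
    by (rule arg_cong[where f="measure Fm"]) auto
  also have "\<dots> = 1 - measure Fm {y. L y > c}" by (rule prob_compl) (simp add: sFp sFm Lgt)
  finally show ?thesis unfolding Q_def .
qed

lemma Fm_le_pos: "measure Fm {y. L y \<le> c} > 0"
proof -
  interpret prob_space Fm by (rule pFm)
  have "measure Fm {y. L y < c} \<le> measure Fm {y. L y \<le> c}"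
    by (intro finite_measure_mono) auto
  with unb(2)[of c] show ?thesis by linarith
qed

lemma Q_pos: "Q c > 0" using unb(1) unfolding Q_def by simp
lemma Q_lt1: "Q c < 1" using Fm_le_pos[of c] compl_Fm[of c] by simp

lemma P_pos: "P c > 0"
proof -
  have "P c \<ge> exp c * Q c" unfolding P_def Q_def by (rule dens_ge) auto
  moreover have "exp c * Q c > 0" using Q_pos by simp
  ultimately show ?thesis by linarith
qed

lemma P_lt1: "P c < 1"
proof -
  interpret prob_space Fp by (rule pFp)
  have S: "{y. L y \<le> c} \<in> sets Fp" by simp
  have "measure Fp {y. L y \<le> c} \<noteq> 0"
  proof
    assume 0: "measure Fp {y. L y \<le> c} = 0"
    have "emeasure Fp {y. L y \<le> c} = 0" using 0 by (simp add: emeasure_eq_measure)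
    then have N: "{y. L y \<le> c} \<in> null_sets Fp" using S by (rule null_setsI)
    have "{y. L y \<le> c} \<in> null_sets Fm" using acpm N unfolding absolutely_continuous_def by blast
    then have "measure Fm {y. L y \<le> c} = 0" by (rule measure_eq_0_null_sets)
    with Fm_le_pos[of c] show False by simp
  qed
  moreover have "measure Fp {y. L y \<le> c} \<ge> 0" by (rule measure_nonneg)
  ultimately have "measure Fp {y. L y \<le> c} > 0" by linarith
  then show ?thesis using compl_Fp[of c] by simp
qed

definition "Dp = D_plus Fp Fm L"
definition "Dm = D_minus Fp Fm L"

lemma llr_cdf_Fp: "llr_cdf Fp L c = 1 - P c" unfolding llr_cdf_def using compl_Fp by simp
lemma llr_cdf_Fm: "llr_cdf Fm L c = 1 - Q c" unfolding llr_cdf_def using compl_Fm by simp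

lemma Dp_eq: "Dp x = ln (P (-x) / Q (-x))"
  unfolding Dp_def D_plus_def llr_cdf_Fp llr_cdf_Fm by simp
lemma Dm_eq: "Dm x = ln ((1 - P (-x)) / (1 - Q (-x)))"
  unfolding Dm_def D_minus_def llr_cdf_Fp llr_cdf_Fm by simp

lemma Dm_cross: "x + Dm x \<le> 0"
proof -
  have "measure Fp {y. L y \<le> -x} \<le> exp (-x) * measure Fm {y. L y \<le> -x}"
    by (rule dens_le) auto
  then have h: "1 - P (-x) \<le> exp (-x) * (1 - Q (-x))" by (simp add: compl_Fp compl_Fm)
  have pos: "1 - P (-x) > 0" "1 - Q (-x) > 0" using P_lt1 Q_lt1 by auto
  have "(1 - P (-x)) / (1 - Q (-x)) \<le> exp (-x)" using h pos by (simp add: divide_le_eq)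
  then have "ln ((1 - P (-x)) / (1 - Q (-x))) \<le> ln (exp (-x))" using pos
    by (subst ln_le_cancel_iff) auto
  then show ?thesis unfolding Dm_eq by simp
qed

lemma Dp_cross: "x + Dp x \<ge> 0"
proof -
  have "measure Fp {y. L y > -x} \<ge> exp (-x) * measure Fm {y. L y > -x}"
    by (rule dens_ge) auto
  then have h: "P (-x) \<ge> exp (-x) * Q (-x)" by (simp add: P_def Q_def)
  have pos: "P (-x) > 0" "Q (-x) > 0" using P_pos Q_pos by auto
  have "exp (-x) \<le> P (-x) / Q (-x)" using h pos by (simp add: le_divide_eq)
  then have "-x \<le> ln (P (-x) / Q (-x))" using pos
    by (subst ln_ge_iff) auto
  then show ?thesis unfolding Dp_eq by simp
qed


definition "gK K = min ((exp K - 1) * Q K) ((1 - exp (-K)) * measure Fm {y. L y < -K})"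

lemma gK_pos: "K > 0 \<Longrightarrow> gK K > 0"
  unfolding gK_def using Q_pos[of K] unb(2)[of "-K"] by simp

lemma gap:
  assumes K: "K > 0" and c: "\<bar>c\<bar> \<le> K"
  shows "P c - Q c \<ge> gK K"
proof (cases "c \<ge> 0")
  case True
  interpret FP: prob_space Fp by (rule pFp)
  interpret FM: prob_space Fm by (rule pFm)
  define S1 where "S1 = {y. c < L y} \<inter> {y. L y \<le> K}"
  define S2 where "S2 = {y. K < L y}"
  have s: "S1 \<in> sets borel" "S2 \<in> sets borel" unfolding S1_def S2_def by auto
  have U: "{y. L y > c} = S1 \<union> S2" "S1 \<inter> S2 = {}" using c unfolding S1_def S2_def by auto
  have "P c = measure Fp S1 + measure Fp S2" unfolding P_def U(1)
    by (rule FP.finite_measure_Union) (use s U in auto)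
  moreover have "Q c = measure Fm S1 + measure Fm S2" unfolding Q_def U(1)
    by (rule FM.finite_measure_Union) (use s U in auto)
  moreover have "measure Fp S1 \<ge> exp 0 * measure Fm S1"
    by (rule dens_ge) (use s True in \<open>auto simp: S1_def\<close>)
  moreover have "measure Fp S2 \<ge> exp K * measure Fm S2"
    by (rule dens_ge) (use s in \<open>auto simp: S2_def\<close>)
  moreover have "measure Fm S2 = Q K" unfolding S2_def Q_def by simp
  ultimately have "P c - Q c \<ge> (exp K - 1) * Q K" by (simp add: algebra_simps)
  then show ?thesis unfolding gK_def by linarith
next
  case False
  interpret FP: prob_space Fp by (rule pFp)
  interpret FM: prob_space Fm by (rule pFm)
  define S1 where "S1 = {y. L y < -K}"
  define S2 where "S2 = {y. -K \<le> L y} \<inter> {y. L y \<le> c}"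
  have s: "S1 \<in> sets borel" "S2 \<in> sets borel" unfolding S1_def S2_def by auto
  have U: "{y. L y \<le> c} = S1 \<union> S2" "S1 \<inter> S2 = {}" using c unfolding S1_def S2_def by auto
  have "1 - P c = measure Fp S1 + measure Fp S2" unfolding compl_Fp[symmetric] U(1)
    by (rule FP.finite_measure_Union) (use s U in auto)
  moreover have "1 - Q c = measure Fm S1 + measure Fm S2" unfolding compl_Fm[symmetric] U(1)
    by (rule FM.finite_measure_Union) (use s U in auto)
  moreover have "measure Fp S2 \<le> exp 0 * measure Fm S2"
    by (rule dens_le) (use s False in \<open>auto simp: S2_def\<close>)
  moreover have "measure Fp S1 \<le> exp (-K) * measure Fm S1"
    by (rule dens_le) (use s in \<open>auto simp: S1_def\<close>)
  ultimately have "P c - Q c \<ge> (1 - exp (-K)) * measure Fm S1" by (simp add: algebra_simps)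
  then show ?thesis unfolding gK_def S1_def by linarith
qed

end

lemma cdf_lim_le:
  fixes F :: "real measure" and f :: "real \<Rightarrow> real"
  assumes "prob_space F" "sets F = sets borel" "f \<in> borel_measurable borel"
  shows "((\<lambda>y. measure F {x. f x \<le> y}) \<longlongrightarrow> 1) at_top"
proof -
  interpret prob_space F by fact
  have sp: "space F = UNIV" using sets_eq_imp_space_eq[OF assms(2)] by simp
  have ms: "{x. f x \<le> y} \<in> sets F" for y
  proof -
    have "f -` {..y} \<inter> space borel \<in> sets borel" by (rule measurable_sets[OF assms(3)]) simp
    moreover have "f -` {..y} \<inter> space borel = {x. f x \<le> y}" by auto
    ultimately have "{x. f x \<le> y} \<in> sets borel" by simp
    then show ?thesis using assms(2) by simp
  qed
  show ?thesis
  proof (rule tendsto_at_topI_sequentially_real)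
    show "mono (\<lambda>y. measure F {x. f x \<le> y})"
      by (rule monoI, rule finite_measure_mono) (use ms in auto)
    have "(\<lambda>n. measure F {x. f x \<le> real n}) \<longlonglongrightarrow> measure F (\<Union>n. {x. f x \<le> real n})"
      by (rule finite_Lim_measure_incseq) (use ms in \<open>auto simp: incseq_def\<close>)
    moreover have "(\<Union>n. {x. f x \<le> real n}) = space F"
      unfolding sp using real_arch_simple by auto
    ultimately show "(\<lambda>n. measure F {x. f x \<le> real n}) \<longlonglongrightarrow> 1" by (simp add: prob_space)
  qed
qed

lemma cdf_lim_less:
  fixes F :: "real measure" and f :: "real \<Rightarrow> real"
  assumes "prob_space F" "sets F = sets borel" "f \<in> borel_measurable borel"
  shows "((\<lambda>y. measure F {x. f x < y}) \<longlongrightarrow> 1) at_top"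
proof -
  interpret prob_space F by fact
  have sp: "space F = UNIV" using sets_eq_imp_space_eq[OF assms(2)] by simp
  have ms: "{x. f x < y} \<in> sets F" for y
  proof -
    have "f -` {..<y} \<inter> space borel \<in> sets borel" by (rule measurable_sets[OF assms(3)]) simp
    moreover have "f -` {..<y} \<inter> space borel = {x. f x < y}" by auto
    ultimately have "{x. f x < y} \<in> sets borel" by simp
    then show ?thesis using assms(2) by simp
  qed
  show ?thesis
  proof (rule tendsto_at_topI_sequentially_real)
    show "mono (\<lambda>y. measure F {x. f x < y})"
      by (rule monoI, rule finite_measure_mono) (use ms in auto)
    have "(\<lambda>n. measure F {x. f x < real n}) \<longlonglongrightarrow> measure F (\<Union>n. {x. f x < real n})"
      by (rule finite_Lim_measure_incseq) (use ms in \<open>auto simp: incseq_def\<close>)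
    moreover have "(\<Union>n. {x. f x < real n}) = space F"
      unfolding sp using reals_Archimedean2 by auto
    ultimately show "(\<lambda>n. measure F {x. f x < real n}) \<longlonglongrightarrow> 1" by (simp add: prob_space)
  qed
qed

context sl begin

lemma Dp_lim: "(Dp \<longlongrightarrow> 0) at_top"
proof -
  have mL: "(\<lambda>y. - L y) \<in> borel_measurable borel" using Lmeas by measurable
  have eP: "(\<lambda>x. P (-x)) = (\<lambda>x. measure Fp {y. - L y < x})"
    unfolding P_def by (rule ext, rule arg_cong[where f="measure Fp"]) auto
  have eQ: "(\<lambda>x. Q (-x)) = (\<lambda>x. measure Fm {y. - L y < x})"
    unfolding Q_def by (rule ext, rule arg_cong[where f="measure Fm"]) auto
  have "((\<lambda>x. P (-x)) \<longlongrightarrow> 1) at_top" unfolding eP by (rule cdf_lim_less[OF pFp sFp mL])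
  moreover have "((\<lambda>x. Q (-x)) \<longlongrightarrow> 1) at_top" unfolding eQ by (rule cdf_lim_less[OF pFm sFm mL])
  ultimately have "((\<lambda>x. ln (P (-x) / Q (-x))) \<longlongrightarrow> ln (1/1)) at_top"
    by (intro tendsto_ln tendsto_divide) auto
  then show ?thesis by (simp add: Dp_eq[abs_def])
qed

lemma Dm_lim: "((\<lambda>y. Dm (-y)) \<longlongrightarrow> 0) at_top"
proof -
  have "((\<lambda>x. measure Fp {y. L y \<le> x}) \<longlongrightarrow> 1) at_top" by (rule cdf_lim_le[OF pFp sFp Lmeas])
  moreover have "((\<lambda>x. measure Fm {y. L y \<le> x}) \<longlongrightarrow> 1) at_top" by (rule cdf_lim_le[OF pFm sFm Lmeas])
  ultimately have "((\<lambda>x. ln ((1 - P x) / (1 - Q x))) \<longlongrightarrow> ln (1/1)) at_top"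
    unfolding compl_Fp compl_Fm by (intro tendsto_ln tendsto_divide) auto
  then show ?thesis by (simp add: Dm_eq)
qed

end


lemma one_exp_pos[simp]: "0 < 1 + exp (x::real)" using exp_gt_zero[of x] by linarith
lemma one_exp_ne[simp]: "1 + exp (x::real) \<noteq> 0" using exp_gt_zero[of x] by linarith

definition sig :: "real \<Rightarrow> real" where "sig x = exp x / (1 + exp x)"

lemma sig_alt: "sig x = 1 - 1 / (1 + exp x)"
proof -
  have "1 + exp x \<noteq> 0" using exp_gt_zero[of x] by linarith
  then show ?thesis unfolding sig_def by (simp add: field_simps)
qed

lemma sig_less: "x < y \<Longrightarrow> sig x < sig y"
  unfolding sig_alt by (simp add: frac_less2 add_pos_pos)

lemma sig_jump:
  assumes a: "0 < a" "a \<le> 1" and b: "0 < b" "b \<le> 1"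
  shows "\<bar>sig (l + ln (a/b)) - sig l\<bar> \<ge> exp l * \<bar>a - b\<bar> / (1 + exp l)^2"
proof -
  define e where "e = exp l"
  have e: "e > 0" unfolding e_def by simp
  have ea: "e * a > 0" using a e by simp
  have bea: "b + e * a > 0" using ea b by linarith
  have ex: "exp (l + ln (a/b)) = e * a / b" unfolding e_def using a b by (simp add: exp_add)
  have "sig (l + ln (a/b)) - sig l = e * (a - b) / ((b + e * a) * (1 + e))"
  proof -
    have "e * a > 0" using a e by simp
    then have "b + e * a > 0" using a b by linarith
    then have "b + e * a \<noteq> 0" "1 + e \<noteq> 0" "b \<noteq> 0" using a b e by auto
    then show ?thesis unfolding sig_def ex e_def[symmetric] by (simp add: field_simps)
  qed
  then have "\<bar>sig (l + ln (a/b)) - sig l\<bar> = e * \<bar>a - b\<bar> / ((b + e * a) * (1 + e))"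
    using a b e by (simp add: abs_mult)
  also have "\<dots> \<ge> e * \<bar>a - b\<bar> / ((1 + e) * (1 + e))"
  proof (rule divide_left_mono)
    show "(b + e * a) * (1 + e) \<le> (1 + e) * (1 + e)"
    proof (intro mult_right_mono)
      have "e * a \<le> e" using a e by (simp add: mult_left_le)
      then show "b + e * a \<le> 1 + e" using b by linarith
    qed (use e in auto)
    show "0 \<le> e * \<bar>a - b\<bar>" using e by simp
    show "0 < (1 + e) * (1 + e) * ((b + e * a) * (1 + e))" using bea e by simp
  qed
  finally have "\<bar>sig (l + ln (a/b)) - sig l\<bar> \<ge> e * \<bar>a - b\<bar> / ((1 + e) * (1 + e))" .
  then show ?thesis by (simp only: e_def power2_eq_square)
qed

lemma cesaro:
  fixes f :: "nat \<Rightarrow> real"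
  assumes "(\<lambda>n. f (Suc n) - f n) \<longlonglongrightarrow> 0"
  shows "(\<lambda>n. f n / real (Suc n)) \<longlonglongrightarrow> 0"
proof (rule LIMSEQ_I)
  fix r :: real assume r: "r > 0"
  obtain N where N: "\<And>n. n \<ge> N \<Longrightarrow> \<bar>f (Suc n) - f n\<bar> < r/2"
    using LIMSEQ_D[OF assms, of "r/2"] r by auto
  have bnd: "\<bar>f n - f N\<bar> \<le> r/2 * real (n - N)" if "n \<ge> N" for n
    using that
  proof (induction n rule: dec_induct)
    case base then show ?case by simp
  next
    case (step n)
    have "\<bar>f (Suc n) - f N\<bar> \<le> \<bar>f (Suc n) - f n\<bar> + \<bar>f n - f N\<bar>" by simp
    also have "\<dots> \<le> r/2 + r/2 * real (n - N)" using N[of n] step by simp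
    also have "\<dots> = r/2 * real (Suc n - N)"
    proof -
      have "real (Suc n - N) = real (n - N) + 1" using step(1) by (simp add: Suc_diff_le)
      then show ?thesis using step(1) by (simp add: field_simps)
    qed
    finally show ?case .
  qed
  obtain M where M: "real M > 2 * \<bar>f N\<bar> / r" using reals_Archimedean2 by blast
  show "\<exists>no. \<forall>n\<ge>no. norm (f n / real (Suc n) - 0) < r"
  proof (intro exI allI impI)
    fix n assume n: "n \<ge> max N M"
    have "\<bar>f n\<bar> \<le> \<bar>f N\<bar> + \<bar>f n - f N\<bar>" by arith
    also have "\<dots> \<le> \<bar>f N\<bar> + r/2 * real (n - N)" using bnd[of n] n by simp
    finally have "\<bar>f n\<bar> \<le> \<bar>f N\<bar> + r/2 * real (n - N)" .
    also have "\<dots> \<le> \<bar>f N\<bar> + r/2 * real n" using r n by (intro add_left_mono mult_left_mono) auto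
    also have "\<dots> < r/2 * real (Suc n) + r/2 * real (Suc n)"
    proof -
      have "2 * \<bar>f N\<bar> / r < real (Suc n)" using M n by simp
      then have "\<bar>f N\<bar> < r/2 * real (Suc n)" using r by (simp add: field_simps)
      moreover have "r/2 * real n \<le> r/2 * real (Suc n)" using r by (intro mult_left_mono) auto
      ultimately show ?thesis by linarith
    qed
    finally have "\<bar>f n\<bar> < r * real (Suc n)" by simp
    then have "\<bar>f n\<bar> / real (Suc n) < r"
      using pos_divide_less_eq[of "real (Suc n)" "\<bar>f n\<bar>" r] by (simp add: mult.commute)
    moreover have "norm (f n / real (Suc n) - 0) = \<bar>f n\<bar> / real (Suc n)"
      by (simp add: abs_divide)
    ultimately show "norm (f n / real (Suc n) - 0) < r" by simp
  qed
qed

context sl begin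

definition "cK K = exp (-K) * gK K / (1 + exp K)^2"

lemma cK_pos: "K > 0 \<Longrightarrow> cK K > 0" unfolding cK_def using gK_pos[of K]
  by (intro divide_pos_pos mult_pos_pos) (auto simp: add_pos_pos)

lemma jump_bound:
  assumes K: "K > 0" and l: "\<bar>l\<bar> \<le> K" and l': "l' = l + Dp l \<or> l' = l + Dm l"
  shows "\<bar>sig l' - sig l\<bar> \<ge> cK K"
proof -
  have g: "P (-l) - Q (-l) \<ge> gK K" using gap[OF K] l by simp
  obtain a b where ab: "0 < a" "a \<le> 1" "0 < b" "b \<le> 1" "\<bar>a - b\<bar> \<ge> gK K" "l' = l + ln (a/b)"
  proof (cases "l' = l + Dp l")
    case True
    show ?thesis
      by (rule that[of "P (-l)" "Q (-l)"]) (use True g P_pos P_lt1 Q_pos Q_lt1 in \<open>auto simp: Dp_eq less_imp_le\<close>)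
  next
    case False
    then have "l' = l + Dm l" using l' by auto
    then show ?thesis
      by (intro that[of "1 - P (-l)" "1 - Q (-l)"]) (use g P_pos P_lt1 Q_pos Q_lt1 in \<open>auto simp: Dm_eq less_imp_le\<close>)
  qed
  have "\<bar>sig l' - sig l\<bar> \<ge> exp l * \<bar>a - b\<bar> / (1 + exp l)^2"
    unfolding ab(6) by (rule sig_jump) (use ab in auto)
  moreover have "exp l * \<bar>a - b\<bar> / (1 + exp l)^2 \<ge> exp (-K) * gK K / (1 + exp K)^2"
  proof (rule frac_le)
    show "0 \<le> exp l * \<bar>a - b\<bar>" by simp
    show "exp (- K) * gK K \<le> exp l * \<bar>a - b\<bar>"
      using l ab(5) gK_pos[OF K] by (intro mult_mono) auto
    show "0 < (1 + exp l)^2" by (simp add: add_pos_pos)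
    show "(1 + exp l)^2 \<le> (1 + exp K)^2"
      using l by (intro power_mono) auto
  qed
  ultimately show ?thesis unfolding cK_def by linarith
qed

end


context sl begin

lemma det:
  fixes l :: "nat \<Rightarrow> real"
  assumes step: "\<And>n. l (Suc n) = l n + Dp (l n) \<or> l (Suc n) = l n + Dm (l n)"
    and conv: "(\<lambda>n. sig (l (Suc n)) - sig (l n)) \<longlonglongrightarrow> 0"
  shows "(\<lambda>n. l n / real (Suc n)) \<longlonglongrightarrow> 0"
proof -
  have big: "eventually (\<lambda>n. \<bar>l n\<bar> > K) sequentially" if K: "K > 0" for K
  proof -
    have "eventually (\<lambda>n. \<bar>sig (l (Suc n)) - sig (l n)\<bar> < cK K) sequentially"
      using conv cK_pos[OF K] unfolding LIMSEQ_iff eventually_sequentially by auto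
    then show ?thesis
    proof (rule eventually_mono)
      fix n assume h: "\<bar>sig (l (Suc n)) - sig (l n)\<bar> < cK K"
      show "\<bar>l n\<bar> > K"
      proof (rule ccontr)
        assume "\<not> \<bar>l n\<bar> > K"
        then have "\<bar>l n\<bar> \<le> K" by simp
        from jump_bound[OF K this step[of n]] h show False by simp
      qed
    qed
  qed
  define d where "d = sig 1 - sig (-1)"
  have d: "d > 0" using sig_less[of "-1" 1] by (simp add: d_def)
  have ev1: "eventually (\<lambda>n. \<bar>sig (l (Suc n)) - sig (l n)\<bar> < d) sequentially"
    using conv d unfolding LIMSEQ_iff eventually_sequentially by auto
  have b1: "eventually (\<lambda>n. \<bar>l n\<bar> > 1) sequentially" using big[of 1] by simp
  have ev2: "eventually (\<lambda>n. \<bar>l (Suc n)\<bar> > 1) sequentially"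
    using b1 eventually_sequentially_Suc[of "\<lambda>n. \<bar>l n\<bar> > 1"] by simp
  have "eventually (\<lambda>n. \<bar>l n\<bar> > 1 \<and> \<bar>l (Suc n)\<bar> > 1 \<and> \<bar>sig (l (Suc n)) - sig (l n)\<bar> < d) sequentially"
    using b1 ev1 ev2 by eventually_elim auto
  then obtain N where N: "\<And>n. n \<ge> N \<Longrightarrow> \<bar>l n\<bar> > 1 \<and> \<bar>l (Suc n)\<bar> > 1 \<and> \<bar>sig (l (Suc n)) - sig (l n)\<bar> < d"
    unfolding eventually_sequentially by auto
  have keep: "l (Suc n) > 0 \<longleftrightarrow> l n > 0" if "n \<ge> N" for n
  proof (rule ccontr)
    assume c: "\<not> (l (Suc n) > 0 \<longleftrightarrow> l n > 0)"
    have h: "\<bar>l n\<bar> > 1" "\<bar>l (Suc n)\<bar> > 1" "\<bar>sig (l (Suc n)) - sig (l n)\<bar> < d" using N[OF that] by auto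
    have "(l n > 1 \<and> l (Suc n) < -1) \<or> (l n < -1 \<and> l (Suc n) > 1)" using c h(1,2) by linarith
    then have "\<bar>sig (l (Suc n)) - sig (l n)\<bar> \<ge> d"
    proof
      assume a: "l n > 1 \<and> l (Suc n) < -1"
      have "sig 1 < sig (l n)" "sig (l (Suc n)) < sig (-1)" using a sig_less by auto
      then show ?thesis unfolding d_def by linarith
    next
      assume a: "l n < -1 \<and> l (Suc n) > 1"
      have "sig (l n) < sig (-1)" "sig 1 < sig (l (Suc n))" using a sig_less by auto
      then show ?thesis unfolding d_def by linarith
    qed
    with h(3) show False by simp
  qed
  have sgn: "l n > 0 \<longleftrightarrow> l N > 0" if "n \<ge> N" for n
    using that by (induction n rule: dec_induct) (auto simp: keep)
  have incr: "(\<lambda>n. l (Suc n) - l n) \<longlonglongrightarrow> 0"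
  proof (cases "l N > 0")
    case True
    have pos: "l n > 0" if "n \<ge> N" for n using sgn[OF that] True by simp
    have lim: "filterlim l at_top sequentially"
      unfolding filterlim_at_top
    proof
      fix Z :: real
      have "max Z 1 > 0" by simp
      then have "eventually (\<lambda>n. \<bar>l n\<bar> > max Z 1) sequentially" by (rule big)
      moreover have "eventually (\<lambda>n. l n > 0) sequentially"
        using pos unfolding eventually_sequentially by auto
      ultimately show "eventually (\<lambda>n. Z \<le> l n) sequentially"
        by eventually_elim auto
    qed
    have eq: "eventually (\<lambda>n. Dp (l n) = l (Suc n) - l n) sequentially"
      unfolding eventually_sequentially
    proof (intro exI allI impI)
      fix n assume n: "n \<ge> N"
      have "l (Suc n) > 0" using pos[of "Suc n"] n by simp
      moreover have "l n + Dm (l n) \<le> 0" by (rule Dm_cross)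
      ultimately show "Dp (l n) = l (Suc n) - l n" using step[of n] by auto
    qed
    have "(\<lambda>n. Dp (l n)) \<longlonglongrightarrow> 0" using filterlim_compose[OF Dp_lim lim] .
    then show ?thesis using eq by (rule Lim_transform_eventually)
  next
    case False
    have neg: "l n < 0" if "n \<ge> N" for n using sgn[OF that] False N[OF that] by auto
    have lim: "filterlim (\<lambda>n. - l n) at_top sequentially"
      unfolding filterlim_at_top
    proof
      fix Z :: real
      have "max Z 1 > 0" by simp
      then have "eventually (\<lambda>n. \<bar>l n\<bar> > max Z 1) sequentially" by (rule big)
      moreover have "eventually (\<lambda>n. l n < 0) sequentially"
        using neg unfolding eventually_sequentially by auto
      ultimately show "eventually (\<lambda>n. Z \<le> - l n) sequentially"
        by eventually_elim auto
    qed
    have eq: "eventually (\<lambda>n. Dm (- (- l n)) = l (Suc n) - l n) sequentially"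
      unfolding eventually_sequentially
    proof (intro exI allI impI)
      fix n assume n: "n \<ge> N"
      have "l (Suc n) < 0" using neg[of "Suc n"] n by simp
      moreover have "l n + Dp (l n) \<ge> 0" by (rule Dp_cross)
      ultimately show "Dm (- (- l n)) = l (Suc n) - l n" using step[of n] by auto
    qed
    have "(\<lambda>n. Dm (- (- l n))) \<longlonglongrightarrow> 0" using filterlim_compose[OF Dm_lim lim] .
    then show ?thesis using eq by (rule Lim_transform_eventually)
  qed
  then show ?thesis by (rule cesaro)
qed

end


context sl begin

fun ell :: "bool list \<Rightarrow> real" where
  "ell [] = 0"
| "ell (b # h) = (if b then ell h + Dp (ell h) else ell h + Dm (ell h))"

fun hist :: "nat \<Rightarrow> (nat \<Rightarrow> real) \<Rightarrow> bool list" where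
  "hist 0 x = []"
| "hist (Suc n) x = (ell (hist n x) + L (x n) > 0) # hist n x"

definition Bs :: "real \<Rightarrow> bool \<Rightarrow> real set" where "Bs c b = {y. (c + L y > 0) = b}"
definition Xs :: "bool list \<Rightarrow> nat \<Rightarrow> real set" where
  "Xs h k = Bs (ell (drop (length h - k) h)) (h ! (length h - 1 - k))"
definition Ev :: "nat \<Rightarrow> bool list \<Rightarrow> (nat \<Rightarrow> real) set" where "Ev n h = {x. hist n x = h}"

fun w :: "real measure \<Rightarrow> bool list \<Rightarrow> real" where
  "w F [] = 1"
| "w F (b # h) = measure F (Bs (ell h) b) * w F h"

definition Hs :: "nat \<Rightarrow> bool list set" where "Hs n = {h. length h = n}"

lemma Bs_True: "Bs c True = {y. L y > -c}" unfolding Bs_def by auto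
lemma Bs_False: "Bs c False = {y. L y \<le> -c}" unfolding Bs_def by auto

lemma Bs_sets: "Bs c b \<in> sets borel"
  by (cases b) (simp_all add: Bs_True Bs_False)

lemma pub_eq: "pub_llr Fp Fm L x n = ell (hist n x)"
  by (induction n) (auto simp: Dp_def Dm_def)

lemma length_hist[simp]: "length (hist n x) = n"
  by (induction n) auto

lemma Xs_cons_lt: "length h = n \<Longrightarrow> k < n \<Longrightarrow> Xs (b # h) k = Xs h k"
proof -
  assume a: "length h = n" "k < n"
  have 1: "Suc n - k = Suc (n - k)" using a by simp
  have 2: "(b # h) ! (Suc n - 1 - k) = h ! (n - 1 - k)"
    using a by (simp add: nth_Cons' Suc_diff_le)
  show ?thesis unfolding Xs_def using a 1 2 by simp
qed

lemma Xs_cons_n: "length h = n \<Longrightarrow> Xs (b # h) n = Bs (ell h) b"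
  unfolding Xs_def by simp

lemma hist_iff: "length h = n \<Longrightarrow> hist n x = h \<longleftrightarrow> (\<forall>k<n. x k \<in> Xs h k)"
proof (induction n arbitrary: h)
  case 0 then show ?case by simp
next
  case (Suc n)
  then obtain b h' where h: "h = b # h'" and lh: "length h' = n" by (cases h) auto
  have "hist (Suc n) x = h \<longleftrightarrow> hist n x = h' \<and> x n \<in> Bs (ell h') b"
    unfolding h Bs_def by auto
  also have "\<dots> \<longleftrightarrow> (\<forall>k<n. x k \<in> Xs h' k) \<and> x n \<in> Bs (ell h') b"
    using Suc.IH[OF lh] by simp
  also have "\<dots> \<longleftrightarrow> (\<forall>k<Suc n. x k \<in> Xs h k)"
    unfolding h using Xs_cons_lt[OF lh] Xs_cons_n[OF lh] by (auto simp: less_Suc_eq)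
  finally show ?case .
qed

lemma space_PS: "space F = UNIV \<Longrightarrow> space (PiM UNIV (\<lambda>_::nat. F)) = UNIV"
  by (auto simp: space_PiM PiE_def extensional_def)

lemma Ev_emb:
  assumes "sets F = sets borel" "length h = n"
  shows "Ev n h = prod_emb UNIV (\<lambda>_. F) {..<n} (PiE {..<n} (Xs h))"
proof -
  have sp: "space F = UNIV" using sets_eq_imp_space_eq[OF assms(1)] by simp
  show ?thesis
    unfolding Ev_def prod_emb_def space_PS[OF sp] using hist_iff[OF assms(2)]
    by (auto simp: restrict_PiE_iff sp)
qed

lemma Xs_sets: "Xs h k \<in> sets borel" unfolding Xs_def by (rule Bs_sets)

lemma Ev_sets:
  assumes "sets F = sets borel" "length h = n"
  shows "Ev n h \<in> sets (PiM UNIV (\<lambda>_::nat. F))"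
  unfolding Ev_emb[OF assms] by (rule sets_PiM_I) (use assms(1) Xs_sets in auto)

lemma prod_w: "length h = n \<Longrightarrow> (\<Prod>k<n. measure F (Xs h k)) = w F h"
proof (induction n arbitrary: h)
  case 0 then show ?case by simp
next
  case (Suc n)
  then obtain b h' where h: "h = b # h'" and lh: "length h' = n" by (cases h) auto
  have "(\<Prod>k<Suc n. measure F (Xs h k)) = (\<Prod>k<n. measure F (Xs h k)) * measure F (Xs h n)"
    by simp
  also have "(\<Prod>k<n. measure F (Xs h k)) = (\<Prod>k<n. measure F (Xs h' k))"
    unfolding h using Xs_cons_lt[OF lh] by (intro prod.cong) auto
  also have "\<dots> = w F h'" by (rule Suc.IH[OF lh])
  also have "measure F (Xs h n) = measure F (Bs (ell h') b)" unfolding h Xs_cons_n[OF lh] ..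
  finally show ?case unfolding h by simp
qed

lemma Ev_measure:
  assumes "prob_space F" "sets F = sets borel" "length h = n"
  shows "emeasure (PiM UNIV (\<lambda>_::nat. F)) (Ev n h) = ennreal (w F h)"
proof -
  interpret prob_space F by fact
  have "emeasure (PiM UNIV (\<lambda>_::nat. F)) (Ev n h) = (\<Prod>k<n. emeasure F (Xs h k))"
    unfolding Ev_emb[OF assms(2,3)]
    by (rule emeasure_PiM_emb) (use assms Xs_sets in auto)
  also have "\<dots> = (\<Prod>k<n. ennreal (measure F (Xs h k)))" by (simp add: emeasure_eq_measure)
  also have "\<dots> = ennreal (\<Prod>k<n. measure F (Xs h k))" by (rule prod_ennreal) simp
  finally show ?thesis using prod_w[OF assms(3)] by simp
qed

lemma w_nonneg: "w F h \<ge> 0" by (induction h) auto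

lemma finite_Hs: "finite (Hs n)"
  using finite_lists_length_eq[of "UNIV :: bool set" n] unfolding Hs_def by simp

lemma sum_Hs_Suc: "(\<Sum>h\<in>Hs (Suc n). f h) = (\<Sum>h\<in>Hs n. f (True # h) + f (False # h))"
proof -
  have eq: "Hs (Suc n) = (\<lambda>(h, b). b # h) ` (Hs n \<times> UNIV)"
    using lists_length_Suc_eq[of "UNIV :: bool set" n] unfolding Hs_def by simp
  have inj: "inj_on (\<lambda>(h, b). b # h) (Hs n \<times> (UNIV :: bool set))" by (auto simp: inj_on_def)
  have "(\<Sum>h\<in>Hs (Suc n). f h) = (\<Sum>p\<in>Hs n \<times> UNIV. f ((\<lambda>(h, b). b # h) p))"
    unfolding eq by (rule sum.reindex[OF inj, unfolded comp_def])
  also have "\<dots> = (\<Sum>h\<in>Hs n. \<Sum>b\<in>UNIV. f (b # h))"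
    by (subst sum.cartesian_product) (simp add: case_prod_beta)
  also have "\<dots> = (\<Sum>h\<in>Hs n. f (True # h) + f (False # h))"
    by (simp add: UNIV_bool add.commute)
  finally show ?thesis .
qed

lemma hist_Hs[simp]: "hist n x \<in> Hs n" unfolding Hs_def by simp

lemma rep:
  fixes f :: "bool list \<Rightarrow> 'a::semiring_1"
  shows "f (hist n x) = (\<Sum>h\<in>Hs n. f h * indicator (Ev n h) x)"
proof -
  have "(\<Sum>h\<in>Hs n. f h * indicator (Ev n h) x) = (\<Sum>h\<in>Hs n. if hist n x = h then f h else 0)"
    by (intro sum.cong) (auto simp: Ev_def indicator_def)
  also have "\<dots> = f (hist n x)" using finite_Hs by (simp add: sum.delta sum.delta')
  finally show ?thesis by simp
qed

end


context sl begin

lemma mFp_T: "measure Fp (Bs c True) = P (-c)" unfolding Bs_True P_def ..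
lemma mFp_F: "measure Fp (Bs c False) = 1 - P (-c)" unfolding Bs_False compl_Fp ..
lemma mFm_T: "measure Fm (Bs c True) = Q (-c)" unfolding Bs_True Q_def ..
lemma mFm_F: "measure Fm (Bs c False) = 1 - Q (-c)" unfolding Bs_False compl_Fm ..

lemma w_ratio: "w Fp h = exp (ell h) * w Fm h"
proof (induction h)
  case Nil then show ?case by simp
next
  case (Cons b h)
  define c where "c = ell h"
  have P: "P (-c) > 0" "P (-c) < 1" and Q: "Q (-c) > 0" "Q (-c) < 1"
    using P_pos P_lt1 Q_pos Q_lt1 by auto
  show ?case
  proof (cases b)
    case True
    have "exp (ell (b # h)) = exp c * (P (-c) / Q (-c))"
      using True P Q by (simp add: c_def[symmetric] Dp_eq exp_add)
    then show ?thesis using True Cons Q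
      by (simp add: c_def[symmetric] mFp_T mFm_T)
  next
    case False
    have "exp (ell (b # h)) = exp c * ((1 - P (-c)) / (1 - Q (-c)))"
      using False P Q by (simp add: c_def[symmetric] Dm_eq exp_add)
    then show ?thesis using False Cons Q
      by (simp add: c_def[symmetric] mFp_F mFm_F)
  qed
qed

lemma w_sum_p: "w Fp (True # h) + w Fp (False # h) = w Fp h"
  by (simp add: mFp_T mFp_F algebra_simps)
lemma w_sum_m: "w Fm (True # h) + w Fm (False # h) = w Fm h"
  by (simp add: mFm_T mFm_F algebra_simps)

lemma w_total:
  assumes "\<And>h. w F (True # h) + w F (False # h) = w F h"
  shows "(\<Sum>h\<in>Hs n. w F h) = 1"
proof (induction n)
  case 0
  have "Hs 0 = {[]}" unfolding Hs_def by auto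
  then show ?case by simp
next
  case (Suc n)
  have "(\<Sum>h\<in>Hs (Suc n). w F h) = (\<Sum>h\<in>Hs n. w F (True # h) + w F (False # h))"
    by (rule sum_Hs_Suc)
  also have "\<dots> = (\<Sum>h\<in>Hs n. w F h)" using assms by simp
  finally show ?case using Suc by simp
qed

definition "Wt h = w Fp h + w Fm h"
definition "Sq h = Wt h * (sig (ell h))^2"
definition "T n = (\<Sum>h\<in>Hs n. Sq h)"
definition "g h = (sig (ell h) - sig (ell (tl h)))^2"

lemma Wt_nonneg: "Wt h \<ge> 0" unfolding Wt_def using w_nonneg[of Fp h] w_nonneg[of Fm h] by simp

lemma sigW: "sig (ell h) * Wt h = w Fp h"
proof -
  define e where "e = exp (ell h)"
  have "sig (ell h) * Wt h = e / (1 + e) * (e * w Fm h + w Fm h)"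
    unfolding sig_def Wt_def w_ratio e_def ..
  also have "\<dots> = e * w Fm h"
  proof -
    have "1 + e \<noteq> 0" unfolding e_def by simp
    then show ?thesis by (simp add: field_simps)
  qed
  finally show ?thesis unfolding e_def w_ratio[symmetric] .
qed

lemma mart:
  "Wt (True # h) * (sig (ell (True # h)) - sig (ell h))^2 + Wt (False # h) * (sig (ell (False # h)) - sig (ell h))^2
   = Sq (True # h) + Sq (False # h) - Sq h"
proof -
  define W1 where "W1 = Wt (True # h)"
  define W2 where "W2 = Wt (False # h)"
  define W where "W = Wt h"
  define s1 where "s1 = sig (ell (True # h))"
  define s2 where "s2 = sig (ell (False # h))"
  define s where "s = sig (ell h)"
  have e1: "W1 + W2 = W" unfolding W1_def W2_def W_def Wt_def
    using w_sum_p[of h] w_sum_m[of h] by simp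
  have e2: "W1 * s1 + W2 * s2 = W * s" unfolding W1_def W2_def W_def s1_def s2_def s_def
    using sigW[of "True # h"] sigW[of "False # h"] sigW[of h] w_sum_p[of h] by (simp add: mult.commute)
  have "W1 * (s1 - s)^2 + W2 * (s2 - s)^2
        = (W1 * s1^2 + W2 * s2^2) - 2 * s * (W1 * s1 + W2 * s2) + s^2 * (W1 + W2)"
    by (simp add: power2_eq_square algebra_simps)
  also have "\<dots> = (W1 * s1^2 + W2 * s2^2) - W * s^2"
    unfolding e1 e2 by (simp add: power2_eq_square algebra_simps)
  finally show ?thesis unfolding W1_def W2_def W_def s1_def s2_def s_def Sq_def .
qed

lemma incr_T: "(\<Sum>h\<in>Hs (Suc n). g h * Wt h) = T (Suc n) - T n"
proof -
  have "(\<Sum>h\<in>Hs (Suc n). g h * Wt h) = (\<Sum>h\<in>Hs n. Sq (True # h) + Sq (False # h) - Sq h)"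
    unfolding sum_Hs_Suc by (intro sum.cong refl) (simp add: g_def mart[symmetric] mult.commute)
  also have "\<dots> = T (Suc n) - T n"
    unfolding T_def sum_Hs_Suc by (simp add: sum_subtractf)
  finally show ?thesis .
qed

lemma sig_01: "0 \<le> sig x" "sig x \<le> 1"
  unfolding sig_def by (auto simp: divide_le_eq)

lemma T_bounds: "0 \<le> T n" "T n \<le> 2"
proof -
  have S: "0 \<le> Sq h" "Sq h \<le> Wt h" for h
  proof -
    have "(sig (ell h))^2 \<le> 1" using sig_01[of "ell h"] by (simp add: power_le_one)
    then show "Sq h \<le> Wt h" unfolding Sq_def using Wt_nonneg[of h] by (simp add: mult_left_le)
    show "0 \<le> Sq h" unfolding Sq_def using Wt_nonneg[of h] by simp
  qed
  show "0 \<le> T n" unfolding T_def using S(1) by (simp add: sum_nonneg)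
  have "T n \<le> (\<Sum>h\<in>Hs n. Wt h)" unfolding T_def using S(2) by (rule sum_mono)
  also have "\<dots> = 2" unfolding Wt_def sum.distrib
    using w_total[of Fp n, OF w_sum_p] w_total[of Fm n, OF w_sum_m] by simp
  finally show "T n \<le> 2" .
qed

end


context sl begin

lemma meas_hist:
  fixes f :: "bool list \<Rightarrow> real"
  assumes "sets F = sets borel"
  shows "(\<lambda>x. f (hist n x)) \<in> borel_measurable (PiM UNIV (\<lambda>_::nat. F))"
proof -
  have eq: "(\<lambda>x. f (hist n x)) = (\<lambda>x. \<Sum>h\<in>Hs n. f h * indicator (Ev n h) x)"
    by (rule ext) (rule rep)
  show ?thesis unfolding eq
    by (intro borel_measurable_sum borel_measurable_times borel_measurable_const
        borel_measurable_indicator Ev_sets[OF assms]) (simp add: Hs_def)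
qed

lemma int_hist:
  fixes f :: "bool list \<Rightarrow> real"
  assumes F: "prob_space F" "sets F = sets borel" and f: "\<And>h. f h \<ge> 0"
  shows "(\<integral>\<^sup>+ x. ennreal (f (hist n x)) \<partial>PiM UNIV (\<lambda>_::nat. F)) = ennreal (\<Sum>h\<in>Hs n. f h * w F h)"
proof -
  have "(\<integral>\<^sup>+ x. ennreal (f (hist n x)) \<partial>PiM UNIV (\<lambda>_::nat. F))
      = (\<integral>\<^sup>+ x. (\<Sum>h\<in>Hs n. ennreal (f h) * indicator (Ev n h) x) \<partial>PiM UNIV (\<lambda>_::nat. F))"
    by (intro nn_integral_cong) (rule rep[of "\<lambda>h. ennreal (f h)"])
  also have "\<dots> = (\<Sum>h\<in>Hs n. \<integral>\<^sup>+ x. ennreal (f h) * indicator (Ev n h) x \<partial>PiM UNIV (\<lambda>_::nat. F))"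
  proof (rule nn_integral_sum)
    fix h assume "h \<in> Hs n"
    then have [measurable]: "Ev n h \<in> sets (PiM UNIV (\<lambda>_::nat. F))"
      by (intro Ev_sets[OF F(2)]) (simp add: Hs_def)
    show "(\<lambda>x. ennreal (f h) * indicator (Ev n h) x) \<in> borel_measurable (PiM UNIV (\<lambda>_::nat. F))"
      by measurable
  qed
  also have "\<dots> = (\<Sum>h\<in>Hs n. ennreal (f h) * ennreal (w F h))"
    by (intro sum.cong refl, subst nn_integral_cmult_indicator)
       (auto simp: Hs_def Ev_sets[OF F(2)] Ev_measure[OF F])
  also have "\<dots> = (\<Sum>h\<in>Hs n. ennreal (f h * w F h))"
    using f w_nonneg by (simp add: ennreal_mult)
  also have "\<dots> = ennreal (\<Sum>h\<in>Hs n. f h * w F h)"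
    using f w_nonneg by (intro sum_ennreal) simp
  finally show ?thesis .
qed

definition "dmu n x = g (hist (Suc n) x)"

lemma dmu_nonneg: "dmu n x \<ge> 0" unfolding dmu_def g_def by simp

lemma dmu_eq: "dmu n x = (sig (ell (hist (Suc n) x)) - sig (ell (hist n x)))^2"
  unfolding dmu_def g_def by simp

lemma dmu_meas:
  assumes "sets F = sets borel"
  shows "(\<lambda>x. ennreal (dmu n x)) \<in> borel_measurable (PiM UNIV (\<lambda>_::nat. F))"
  unfolding dmu_def by (intro measurable_compose[OF _ measurable_ennreal] meas_hist[OF assms])

lemma sum_int:
  "(\<integral>\<^sup>+ x. ennreal (dmu n x) \<partial>PiM UNIV (\<lambda>_::nat. Fp)) + (\<integral>\<^sup>+ x. ennreal (dmu n x) \<partial>PiM UNIV (\<lambda>_::nat. Fm))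
   = ennreal (T (Suc n) - T n)"
proof -
  have gn: "g h \<ge> 0" for h unfolding g_def by simp
  have "(\<integral>\<^sup>+ x. ennreal (dmu n x) \<partial>PiM UNIV (\<lambda>_::nat. Fp)) = ennreal (\<Sum>h\<in>Hs (Suc n). g h * w Fp h)"
    unfolding dmu_def by (rule int_hist[OF pFp sFp gn])
  moreover have "(\<integral>\<^sup>+ x. ennreal (dmu n x) \<partial>PiM UNIV (\<lambda>_::nat. Fm)) = ennreal (\<Sum>h\<in>Hs (Suc n). g h * w Fm h)"
    unfolding dmu_def by (rule int_hist[OF pFm sFm gn])
  moreover have "(\<Sum>h\<in>Hs (Suc n). g h * w Fp h) + (\<Sum>h\<in>Hs (Suc n). g h * w Fm h) = (\<Sum>h\<in>Hs (Suc n). g h * Wt h)"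
    unfolding Wt_def by (simp add: sum.distrib algebra_simps)
  moreover have "(\<Sum>h\<in>Hs (Suc n). g h * w Fp h) \<ge> 0" "(\<Sum>h\<in>Hs (Suc n). g h * w Fm h) \<ge> 0"
    using gn w_nonneg by (auto intro!: sum_nonneg)
  ultimately show ?thesis using incr_T[of n] by (simp add: ennreal_plus[symmetric])
qed

lemma tot_bound:
  assumes F: "F = Fp \<or> F = Fm"
  shows "(\<integral>\<^sup>+ x. (\<Sum>n. ennreal (dmu n x)) \<partial>PiM UNIV (\<lambda>_::nat. F)) \<le> 2"
proof -
  have sF: "sets F = sets borel" using F sFp sFm by auto
  define I where "I n = (\<integral>\<^sup>+ x. ennreal (dmu n x) \<partial>PiM UNIV (\<lambda>_::nat. F))" for n
  have Ile: "I n \<le> ennreal (T (Suc n) - T n)" for n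
  proof -
    let ?a = "(\<integral>\<^sup>+ x. ennreal (dmu n x) \<partial>PiM UNIV (\<lambda>_::nat. Fp))"
    let ?b = "(\<integral>\<^sup>+ x. ennreal (dmu n x) \<partial>PiM UNIV (\<lambda>_::nat. Fm))"
    have 1: "?a \<le> ?a + ?b" by (rule add_increasing2) auto
    have 2: "?b \<le> ?a + ?b" by (rule add_increasing) auto
    show ?thesis using F 1 2 sum_int[of n] unfolding I_def by auto
  qed
  have "(\<integral>\<^sup>+ x. (\<Sum>n. ennreal (dmu n x)) \<partial>PiM UNIV (\<lambda>_::nat. F)) = (\<Sum>n. I n)"
    unfolding I_def by (rule nn_integral_suminf) (rule dmu_meas[OF sF])
  also have "\<dots> = (SUP N. \<Sum>n<N. I n)" by (rule suminf_eq_SUP)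
  also have "\<dots> \<le> 2"
  proof (rule SUP_least)
    fix N
    have "(\<Sum>n<N. I n) \<le> (\<Sum>n<N. ennreal (T (Suc n) - T n))" by (intro sum_mono Ile)
    also have "\<dots> = ennreal (\<Sum>n<N. T (Suc n) - T n)"
    proof (rule sum_ennreal)
      fix n show "0 \<le> T (Suc n) - T n"
      proof -
        have "0 \<le> (\<Sum>h\<in>Hs (Suc n). g h * Wt h)"
          by (intro sum_nonneg mult_nonneg_nonneg) (auto simp: g_def Wt_nonneg)
        then show ?thesis using incr_T[of n] by simp
      qed
    qed
    also have "\<dots> = ennreal (T N - T 0)" by (simp add: sum_lessThan_telescope)
    also have "\<dots> \<le> 2"
    proof -
      have "T N - T 0 \<le> 2" using T_bounds[of N] T_bounds[of 0] by linarith
      then have "ennreal (T N - T 0) \<le> ennreal 2" by (rule ennreal_leI)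
      then show ?thesis by simp
    qed
    finally show "(\<Sum>n<N. I n) \<le> 2" .
  qed
  finally show ?thesis .
qed

lemma AE_good:
  assumes F: "F = Fp \<or> F = Fm"
  shows "AE x in PiM UNIV (\<lambda>_::nat. F). (\<lambda>n. pub_llr Fp Fm L x n / real (Suc n)) \<longlonglongrightarrow> 0"
proof -
  have sF: "sets F = sets borel" using F sFp sFm by auto
  have "AE x in PiM UNIV (\<lambda>_::nat. F). (\<Sum>n. ennreal (dmu n x)) \<noteq> \<infinity>"
  proof (rule nn_integral_PInf_AE)
    show "(\<lambda>x. \<Sum>n. ennreal (dmu n x)) \<in> borel_measurable (PiM UNIV (\<lambda>_::nat. F))"
      using dmu_meas[OF sF] by measurable
    show "(\<integral>\<^sup>+ x. (\<Sum>n. ennreal (dmu n x)) \<partial>PiM UNIV (\<lambda>_::nat. F)) \<noteq> \<infinity>"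
      using tot_bound[OF F] by (auto simp: top_unique)
  qed
  then show ?thesis
  proof (rule eventually_mono)
    fix x assume fin: "(\<Sum>n. ennreal (dmu n x)) \<noteq> \<infinity>"
    have "summable (\<lambda>n. dmu n x)" by (rule summable_suminf_not_top) (use fin dmu_nonneg in auto)
    then have "(\<lambda>n. dmu n x) \<longlonglongrightarrow> 0" by (rule summable_LIMSEQ_zero)
    then have "(\<lambda>n. sqrt (dmu n x)) \<longlonglongrightarrow> sqrt 0" by (rule tendsto_real_sqrt)
    then have "(\<lambda>n. \<bar>sig (ell (hist (Suc n) x)) - sig (ell (hist n x))\<bar>) \<longlonglongrightarrow> 0"
      by (simp add: dmu_eq)
    then have conv: "(\<lambda>n. sig (ell (hist (Suc n) x)) - sig (ell (hist n x))) \<longlonglongrightarrow> 0"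
      by (simp add: tendsto_rabs_zero_iff)
    have step: "ell (hist (Suc n) x) = ell (hist n x) + Dp (ell (hist n x))
        \<or> ell (hist (Suc n) x) = ell (hist n x) + Dm (ell (hist n x))" for n
      by simp
    have "(\<lambda>n. ell (hist n x) / real (Suc n)) \<longlonglongrightarrow> 0"
      by (rule det[of "\<lambda>n. ell (hist n x)", OF step conv])
    then show "(\<lambda>n. pub_llr Fp Fm L x n / real (Suc n)) \<longlonglongrightarrow> 0" by (simp add: pub_eq)
  qed
qed

end


theorem theorem1:
  fixes M :: "'w measure" and \<theta> :: "'w \<Rightarrow> int" and s :: "nat \<Rightarrow> 'w \<Rightarrow> real"
    and Fp Fm :: "real measure" and L :: "real \<Rightarrow> real"
  assumes "prob_space M"
    and "prob_space Fp" and "prob_space Fm"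
    and "sets Fp = sets borel" and "sets Fm = sets borel"
    and "absolutely_continuous Fp Fm" and "absolutely_continuous Fm Fp"
    and "\<theta> \<in> M \<rightarrow>\<^sub>M count_space UNIV" and "\<forall>\<omega>\<in>space M. \<theta> \<omega> \<in> {-1, 1}"
    and "(\<lambda>\<omega> t. s t \<omega>) \<in> M \<rightarrow>\<^sub>M PiM UNIV (\<lambda>_. borel)"
    and "\<forall>A \<in> sets (PiM UNIV (\<lambda>_::nat. borel :: real measure)).
           measure M {\<omega> \<in> space M. \<theta> \<omega> = 1 \<and> (\<lambda>t. s t \<omega>) \<in> A}
             = 1/2 * measure (PiM UNIV (\<lambda>_. Fp)) A
         \<and> measure M {\<omega> \<in> space M. \<theta> \<omega> = -1 \<and> (\<lambda>t. s t \<omega>) \<in> A}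
             = 1/2 * measure (PiM UNIV (\<lambda>_. Fm)) A"
    and "L \<in> borel_measurable borel"
    and "Fp = density Fm (\<lambda>x. ennreal (exp (L x)))"
    and "\<forall>t K. measure M {\<omega> \<in> space M. L (s t \<omega>) > K} > 0
             \<and> measure M {\<omega> \<in> space M. L (s t \<omega>) < - K} > 0"
  shows "AE \<omega> in M. (\<lambda>n. pub_llr Fp Fm L (\<lambda>t. s t \<omega>) n / real (Suc n)) \<longlonglongrightarrow> 0"
proof -
  note A = assms
  interpret PM: prob_space M by (rule A(1))
  interpret FP: prob_space Fp by (rule A(2))
  interpret FM: prob_space Fm by (rule A(3))
  define X where "X \<omega> = (\<lambda>t. s t \<omega>)" for \<omega>
  have Xm[measurable]: "X \<in> M \<rightarrow>\<^sub>M PiM UNIV (\<lambda>_. borel)" unfolding X_def by (rule A(10))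
  have thetam[measurable]: "\<theta> \<in> M \<rightarrow>\<^sub>M count_space UNIV" by (rule A(8))
  have setsP: "sets (PiM UNIV (\<lambda>_::nat. F)) = sets (PiM UNIV (\<lambda>_::nat. borel :: real measure))"
    if "sets F = sets borel" for F :: "real measure"
    by (rule sets_PiM_cong) (use that in auto)
  have sets1: "{\<omega> \<in> space M. \<theta> \<omega> = c \<and> X \<omega> \<in> N} \<in> sets M"
    if N: "N \<in> sets (PiM UNIV (\<lambda>_::nat. borel :: real measure))" for N c
  proof -
    have [measurable]: "N \<in> sets (PiM UNIV (\<lambda>_::nat. borel :: real measure))" by (rule N)
    show ?thesis by measurable
  qed
  have mix: "measure M {\<omega> \<in> space M. X \<omega> \<in> N} \<le>
      1/2 * measure (PiM UNIV (\<lambda>_::nat. Fp)) N + 1/2 * measure (PiM UNIV (\<lambda>_::nat. Fm)) N"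
    if N: "N \<in> sets (PiM UNIV (\<lambda>_::nat. borel :: real measure))" for N
  proof -
    have "{\<omega> \<in> space M. X \<omega> \<in> N} \<subseteq> {\<omega> \<in> space M. \<theta> \<omega> = 1 \<and> X \<omega> \<in> N} \<union> {\<omega> \<in> space M. \<theta> \<omega> = -1 \<and> X \<omega> \<in> N}"
      using A(9) by auto
    then have "measure M {\<omega> \<in> space M. X \<omega> \<in> N} \<le>
        measure M ({\<omega> \<in> space M. \<theta> \<omega> = 1 \<and> X \<omega> \<in> N} \<union> {\<omega> \<in> space M. \<theta> \<omega> = -1 \<and> X \<omega> \<in> N})"
      by (intro PM.finite_measure_mono) (use sets1[OF N] in auto)
    also have "\<dots> \<le> measure M {\<omega> \<in> space M. \<theta> \<omega> = 1 \<and> X \<omega> \<in> N} + measure M {\<omega> \<in> space M. \<theta> \<omega> = -1 \<and> X \<omega> \<in> N}"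
      by (rule measure_Un_le) (use sets1[OF N] in auto)
    also have "\<dots> = 1/2 * measure (PiM UNIV (\<lambda>_::nat. Fp)) N + 1/2 * measure (PiM UNIV (\<lambda>_::nat. Fm)) N"
      using A(11) N unfolding X_def by auto
    finally show ?thesis .
  qed
  have pos: "measure Fm R > 0" if R: "R \<in> sets borel" and posM: "measure M {\<omega> \<in> space M. s 0 \<omega> \<in> R} > 0" for R
  proof (rule ccontr)
    assume "\<not> measure Fm R > 0"
    then have m0: "measure Fm R = 0" using measure_nonneg[of Fm R] by linarith
    have nm: "R \<in> null_sets Fm" using m0 R A(5) by (intro null_setsI) (auto simp: FM.emeasure_eq_measure)
    then have "R \<in> null_sets Fp" using A(7) unfolding absolutely_continuous_def by blast
    then have p0: "measure Fp R = 0" by (rule measure_eq_0_null_sets)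
    define N where "N = {x :: nat \<Rightarrow> real. x 0 \<in> R}"
    have N: "N \<in> sets (PiM UNIV (\<lambda>_::nat. borel :: real measure))"
    proof -
      have "(\<lambda>x::nat \<Rightarrow> real. x 0) -` R \<inter> space (PiM UNIV (\<lambda>_::nat. borel :: real measure)) \<in> sets (PiM UNIV (\<lambda>_::nat. borel :: real measure))"
        by (rule measurable_sets[OF measurable_component_singleton]) (use R in auto)
      moreover have "(\<lambda>x::nat \<Rightarrow> real. x 0) -` R = {x :: nat \<Rightarrow> real. x 0 \<in> R}" by auto
      ultimately show ?thesis unfolding N_def by (simp add: space_PiM)
    qed
    have mN: "measure (PiM UNIV (\<lambda>_::nat. F)) N = measure F R"
      if F: "prob_space F" "sets F = sets borel" for F :: "real measure"
    proof -
      have sp: "space F = UNIV" using sets_eq_imp_space_eq[OF F(2)] by simp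
      have "N = prod_emb UNIV (\<lambda>_. F) {0} (PiE {0} (\<lambda>_. R))"
        unfolding N_def prod_emb_def by (auto simp: space_PiM sp PiE_def extensional_def)
      then have "emeasure (PiM UNIV (\<lambda>_::nat. F)) N = (\<Prod>i\<in>{0}. emeasure F R)"
        using emeasure_PiM_emb[of UNIV "\<lambda>_. F" "{0}" "\<lambda>_. R"] F R by auto
      then show ?thesis by (simp add: measure_def)
    qed
    have "measure M {\<omega> \<in> space M. X \<omega> \<in> N} \<le> 0"
      using mix[OF N] mN[OF A(2,4)] mN[OF A(3,5)] p0 m0 by simp
    moreover have "{\<omega> \<in> space M. X \<omega> \<in> N} = {\<omega> \<in> space M. s 0 \<omega> \<in> R}"
      unfolding N_def X_def by auto
    ultimately show False using posM by simp
  qed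
  have unb1: "measure Fm {y. L y > K} > 0" for K
  proof (rule pos)
    show "{y. L y > K} \<in> sets borel" using A(12) by measurable
    show "measure M {\<omega> \<in> space M. s 0 \<omega> \<in> {y. L y > K}} > 0" using A(14) by auto
  qed
  have unb2: "measure Fm {y. L y < K} > 0" for K
  proof (rule pos)
    show "{y. L y < K} \<in> sets borel" using A(12) by measurable
    show "measure M {\<omega> \<in> space M. s 0 \<omega> \<in> {y. L y < K}} > 0" 
    proof -
      have "measure M {\<omega> \<in> space M. L (s 0 \<omega>) < - (-K)} > 0" using A(14) by blast
      then show ?thesis by simp
    qed
  qed
  interpret sl Fp Fm L
    by unfold_locales (use A unb1 unb2 in auto)
  define good where "good x = (\<lambda>n. pub_llr Fp Fm L x n / real (Suc n)) \<longlonglongrightarrow> 0" for x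
  have "AE x in PiM UNIV (\<lambda>_::nat. Fp). good x" unfolding good_def by (rule AE_good) simp
  then obtain Np where Np: "{x \<in> space (PiM UNIV (\<lambda>_::nat. Fp)). \<not> good x} \<subseteq> Np"
      "emeasure (PiM UNIV (\<lambda>_::nat. Fp)) Np = 0" "Np \<in> sets (PiM UNIV (\<lambda>_::nat. Fp))"
    by (rule AE_E)
  have "AE x in PiM UNIV (\<lambda>_::nat. Fm). good x" unfolding good_def by (rule AE_good) simp
  then obtain Nm where Nm: "{x \<in> space (PiM UNIV (\<lambda>_::nat. Fm)). \<not> good x} \<subseteq> Nm"
      "emeasure (PiM UNIV (\<lambda>_::nat. Fm)) Nm = 0" "Nm \<in> sets (PiM UNIV (\<lambda>_::nat. Fm))"
    by (rule AE_E)
  have Np': "Np \<in> sets (PiM UNIV (\<lambda>_::nat. borel :: real measure))" using Np(3) setsP[OF A(4)] by simp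
  have Nm': "Nm \<in> sets (PiM UNIV (\<lambda>_::nat. borel :: real measure))" using Nm(3) setsP[OF A(5)] by simp
  define A1 where "A1 = {\<omega> \<in> space M. \<theta> \<omega> = 1 \<and> X \<omega> \<in> Np}"
  define A2 where "A2 = {\<omega> \<in> space M. \<theta> \<omega> = -1 \<and> X \<omega> \<in> Nm}"
  have A1s: "A1 \<in> sets M" unfolding A1_def by (rule sets1[OF Np'])
  have A2s: "A2 \<in> sets M" unfolding A2_def by (rule sets1[OF Nm'])
  have "measure M A1 = 1/2 * measure (PiM UNIV (\<lambda>_::nat. Fp)) Np"
    using A(11) Np' unfolding A1_def X_def by auto
  then have "measure M A1 = 0" using Np(2) by (simp add: measure_def)
  then have A1n: "A1 \<in> null_sets M" using A1s by (intro null_setsI) (auto simp: PM.emeasure_eq_measure)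
  have "measure M A2 = 1/2 * measure (PiM UNIV (\<lambda>_::nat. Fm)) Nm"
    using A(11) Nm' unfolding A2_def X_def by auto
  then have "measure M A2 = 0" using Nm(2) by (simp add: measure_def)
  then have A2n: "A2 \<in> null_sets M" using A2s by (intro null_setsI) (auto simp: PM.emeasure_eq_measure)
  have spp: "space (PiM UNIV (\<lambda>_::nat. Fp)) = UNIV" "space (PiM UNIV (\<lambda>_::nat. Fm)) = UNIV"
    by (simp_all add: space_PS)
  show ?thesis
  proof (rule AE_I')
    show "A1 \<union> A2 \<in> null_sets M" using A1n A2n by auto
    show "{\<omega> \<in> space M. \<not> (\<lambda>n. pub_llr Fp Fm L (\<lambda>t. s t \<omega>) n / real (Suc n)) \<longlonglongrightarrow> 0} \<subseteq> A1 \<union> A2"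
    proof
      fix \<omega> assume w: "\<omega> \<in> {\<omega> \<in> space M. \<not> (\<lambda>n. pub_llr Fp Fm L (\<lambda>t. s t \<omega>) n / real (Suc n)) \<longlonglongrightarrow> 0}"
      then have ng: "\<not> good (X \<omega>)" and sp: "\<omega> \<in> space M" unfolding good_def X_def by auto
      have "X \<omega> \<in> Np" "X \<omega> \<in> Nm" using ng Np(1) Nm(1) spp by auto
      then show "\<omega> \<in> A1 \<union> A2" using A(9) sp unfolding A1_def A2_def by auto
    qed
  qed
qed


end
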